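(* Let $\{X_k\},\{V_k\},\{\mu_k\}$ be generated by the SMPG algorithm. There exists a constant $\bar\alpha\in(0,1]$, independent of $k$, such that for every $k$ and every $\alpha\in(0,\bar\alpha)$, $$\tilde f(X_k,\mu_k)-\tilde f(\mathfrak{R}_{X_k}(\alpha V_k),\mu_k)\ge\frac{\alpha}{2\mu_k}\|V_k\|_{\mathrm F}^2 .$$ In particular the Armijo backtracking in each iteration terminates after at most $\lceil\log_\beta\bar\alpha\rceil$ trials and $\alpha_k\ge\beta\bar\alpha$.
   Context: Setting. $1\le r<d$, $\mathcal{O}^{d,r}=\{X\in\mathbb{R}^{d\times r}:X^\top X=I_r\}$, $\mathcal{T}_X\mathcal{O}^{d,r}=\{D:X^\top D+D^\top X=0\}$. Consider $\min_{X\in\mathcal{O}^{d,r}}f(X)=u(X)+s(X)+w(X)$, where $u:\mathbb{R}^{d\times r}\to\mathbb{R}$ is continuously differentiable with $L_u$-Lipschitz gradient; $s:\mathbb{R}^{d\times r}\to\mathbb{R}$ is convex and $L_s$-Lipschitz; $w(X)=2\rho\|(I_d-XX^\top)\Sigma_\circ^{1/2}\|_{\mathrm F}$ with $\Sigma_\circ\in\mathbb{S}_+^d$, $\rho>0$. Smoothing: $\tilde w(X,\mu)=w(X)$ if $w(X)\ge\mu\rho$, $\tilde w(X,\mu)=\frac{w(X)^2}{2\mu\rho}+\frac{\mu\rho}{2}$ otherwise; $\tilde g(X,\mu)=u(X)+\tilde w(X,\mu)$, $\tilde f(X,\mu)=\tilde g(X,\mu)+s(X)$; $\nabla$ is the Euclidean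 gradient in $X$. A retraction is a smooth map $\mathfrak{R}$ on the tangent bundle of $\mathcal{O}^{d,r}$ with $\mathfrak{R}_X(0)=X$ and $\mathrm{D}\mathfrak{R}_X(0)=\mathrm{id}$ on $\mathcal{T}_X\mathcal{O}^{d,r}$. SMPG algorithm: inputs $X_0\in\mathcal{O}^{d,r}$, $\mu_0>0$, $\bar\mu\in[0,\mu_0]$, $\theta\in(0,1)$, $\beta\in(0,1)$. For $k=0,1,\dots$: compute $V_k=\arg\min_{V\in\mathcal{T}_{X_k}\mathcal{O}^{d,r}}\langle\nabla\tilde g(X_k,\mu_k),V\rangle+\frac{1}{2\mu_k}\|V\|_{\mathrm F}^2+s(X_k+V)$; if $\|V_k\|_{\mathrm F}\le\bar\mu^2$ and $\mu_k\le\bar\mu$, stop and return $X_k$; otherwise set $\alpha_k=\beta^{m_k}$ with $m_k$ the smallest nonnegative integer such that $\tilde f(\mathfrak{R}_{X_k}(\beta^{m_k}V_k),\mu_k)\le\tilde f(X_k,\mu_k)-\frac{\beta^{m_k}}{2\mu_k}\|V_k\|_{\mathrm F}^2$, set $X_{k+1}=\mathfrak{R}_{X_k}(\alpha_kV_k)$, and set $\mu_{k+1}=\mu_k$ if $\|V_k\|_{\mathrm F}>\mu_k^2$, $\mu_{k+1}=\theta\mu_k$ if $\|V_k\|_{\mathrm F}\le\mu_k^2$. *)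

theory Defs
  imports "HOL-Analysis.Analysis"
begin

text \<open>Matrices in R^(d x r) are rendered as real^'r^'d (rows indexed by 'd).
  The norm on this type is the Frobenius norm, and the inner product is the
  trace inner product.\<close>

definition stiefel :: "(real^'r^'d) set" where
  "stiefel = {X. transpose X ** X = mat 1}"

definition tangent :: "real^'r^'d \<Rightarrow> (real^'r^'d) set" where
  "tangent X = {D. transpose X ** D + transpose D ** X = 0}"

definition tangent_bundle :: "((real^'r^'d) \<times> (real^'r^'d)) set" where
  "tangent_bundle = {(X, D). X \<in> stiefel \<and> D \<in> tangent X}"

definition psd :: "real^'n^'n \<Rightarrow> bool" where
  "psd M \<longleftrightarrow> transpose M = M \<and> (\<forall>x. 0 \<le> x \<bullet> (M *v x))"

definition egrad :: "('a::real_inner \<Rightarrow> real) \<Rightarrow> 'a \<Rightarrow> 'a" where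
  "egrad f x = (THE G. (f has_derivative (\<lambda>h. G \<bullet> h)) (at x))"

fun Ck :: "nat \<Rightarrow> 'a::real_normed_vector set \<Rightarrow> ('a \<Rightarrow> 'b::real_normed_vector) \<Rightarrow> bool" where
  "Ck 0 U f = continuous_on U f"
| "Ck (Suc k) U f = ((\<forall>x\<in>U. f differentiable (at x)) \<and>
      (\<forall>h. Ck k U (\<lambda>x. frechet_derivative f (at x) h)))"

definition smooth_on :: "'a::real_normed_vector set \<Rightarrow> ('a \<Rightarrow> 'b::real_normed_vector) \<Rightarrow> bool" where
  "smooth_on U f \<longleftrightarrow> open U \<and> (\<forall>k. Ck k U f)"

text \<open>Retraction on the Stiefel manifold: smooth map on the tangent bundle
  (smooth = restriction of a smooth map on an open neighbourhood), into the manifold,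
  with R_X(0) = X and D R_X(0) = id on the tangent space.\<close>
definition retraction :: "(real^'r^'d \<Rightarrow> real^'r^'d \<Rightarrow> real^'r^'d) \<Rightarrow> bool" where
  "retraction R \<longleftrightarrow>
     (\<forall>(X, D) \<in> tangent_bundle. R X D \<in> stiefel) \<and>
     (\<exists>U F. tangent_bundle \<subseteq> U \<and> smooth_on U F \<and>
            (\<forall>(X, D) \<in> tangent_bundle. F (X, D) = R X D)) \<and>
     (\<forall>X \<in> stiefel. R X 0 = X \<and> (R X has_derivative id) (at 0 within tangent X))"

definition wfun :: "real \<Rightarrow> real^'d^'d \<Rightarrow> real^'r^'d \<Rightarrow> real" where
  "wfun \<rho> Sh X = 2 * \<rho> * norm ((mat 1 - X ** transpose X) ** Sh)"

definition wsm :: "real \<Rightarrow> real^'d^'d \<Rightarrow> real^'r^'d \<Rightarrow> real \<Rightarrow> real" where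
  "wsm \<rho> Sh X \<mu> = (if wfun \<rho> Sh X \<ge> \<mu> * \<rho> then wfun \<rho> Sh X
      else (wfun \<rho> Sh X)\<^sup>2 / (2 * \<mu> * \<rho>) + \<mu> * \<rho> / 2)"

definition gsm :: "(real^'r^'d \<Rightarrow> real) \<Rightarrow> real \<Rightarrow> real^'d^'d \<Rightarrow> real^'r^'d \<Rightarrow> real \<Rightarrow> real" where
  "gsm u \<rho> Sh X \<mu> = u X + wsm \<rho> Sh X \<mu>"

definition fsm :: "(real^'r^'d \<Rightarrow> real) \<Rightarrow> (real^'r^'d \<Rightarrow> real) \<Rightarrow> real \<Rightarrow> real^'d^'d \<Rightarrow> real^'r^'d \<Rightarrow> real \<Rightarrow> real" where
  "fsm u s \<rho> Sh X \<mu> = gsm u \<rho> Sh X \<mu> + s X"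

definition subobj :: "(real^'r^'d \<Rightarrow> real) \<Rightarrow> (real^'r^'d \<Rightarrow> real) \<Rightarrow> real \<Rightarrow> real^'d^'d \<Rightarrow> real^'r^'d \<Rightarrow> real \<Rightarrow> real^'r^'d \<Rightarrow> real" where
  "subobj u s \<rho> Sh X \<mu> V = egrad (\<lambda>Y. gsm u \<rho> Sh Y \<mu>) X \<bullet> V + (norm V)\<^sup>2 / (2 * \<mu>) + s (X + V)"

definition smpg_stop :: "real \<Rightarrow> real^'r^'d \<Rightarrow> real \<Rightarrow> bool" where
  "smpg_stop \<mu>bar V \<mu> \<longleftrightarrow> norm V \<le> \<mu>bar\<^sup>2 \<and> \<mu> \<le> \<mu>bar"

definition armijo :: "(real^'r^'d \<Rightarrow> real) \<Rightarrow> (real^'r^'d \<Rightarrow> real) \<Rightarrow> real \<Rightarrow> real^'d^'d \<Rightarrow>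
    (real^'r^'d \<Rightarrow> real^'r^'d \<Rightarrow> real^'r^'d) \<Rightarrow> real^'r^'d \<Rightarrow> real^'r^'d \<Rightarrow> real \<Rightarrow> real \<Rightarrow> bool" where
  "armijo u s \<rho> Sh R X V \<mu> a \<longleftrightarrow>
     fsm u s \<rho> Sh (R X (a *\<^sub>R V)) \<mu> \<le> fsm u s \<rho> Sh X \<mu> - a / (2 * \<mu>) * (norm V)\<^sup>2"

end

theory Submission
  imports Defs
begin

lemma norm_sq_vec: "(norm (x::real^'n))\<^sup>2 = (\<Sum>i\<in>UNIV. (x$i)\<^sup>2)"
  unfolding power2_norm_eq_inner inner_vec_def by (simp add: power2_eq_square)

lemma norm_sq_mat: "(norm (A::real^'n^'m))\<^sup>2 = (\<Sum>i\<in>UNIV. (norm (A$i))\<^sup>2)"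
  by (simp add: power2_norm_eq_inner inner_vec_def power2_eq_square[symmetric] dot_square_norm)

lemma norm_sq_mat2: "(norm (A::real^'n^'m))\<^sup>2 = (\<Sum>i\<in>UNIV. \<Sum>j\<in>UNIV. (A$i$j)\<^sup>2)"
  by (simp add: norm_sq_mat norm_sq_vec)

lemma norm_transpose: "norm (transpose (A::real^'n^'m)) = norm A"
proof -
  have "(norm (transpose A))\<^sup>2 = (norm A)\<^sup>2"
    unfolding norm_sq_mat2 transpose_def by (simp, rule sum.swap)
  thus ?thesis by (simp add: power2_eq_iff_nonneg)
qed

lemma mat_mult_entry: "(A ** B)$i$j = (A$i) \<bullet> (column j (B::real^'p^'n))" for A :: "real^'n^'m"
  by (simp add: matrix_matrix_mult_def inner_vec_def column_def mult.commute)

lemma norm_column_sum: "(\<Sum>j\<in>UNIV. (norm (column j (B::real^'p^'n)))\<^sup>2) = (norm B)\<^sup>2"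
  unfolding norm_sq_mat2 norm_sq_vec column_def by (simp, rule sum.swap)

lemma norm_mat_mult: "norm (A ** B) \<le> norm A * norm (B::real^'p^'n)" for A :: "real^'n^'m"
proof -
  have "(norm (A ** B))\<^sup>2 = (\<Sum>i\<in>UNIV. \<Sum>j\<in>UNIV. ((A$i) \<bullet> (column j B))\<^sup>2)"
    by (simp add: norm_sq_mat2 mat_mult_entry)
  also have "\<dots> \<le> (\<Sum>i\<in>UNIV. \<Sum>j\<in>UNIV. (norm (A$i))\<^sup>2 * (norm (column j B))\<^sup>2)"
  proof (intro sum_mono)
    fix i j
    have "\<bar>(A$i) \<bullet> (column j B)\<bar> \<le> norm (A$i) * norm (column j B)" by (rule Cauchy_Schwarz_ineq2)
    hence "\<bar>(A$i) \<bullet> (column j B)\<bar>\<^sup>2 \<le> (norm (A$i) * norm (column j B))\<^sup>2"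
      by (rule power_mono) simp
    thus "((A$i) \<bullet> (column j B))\<^sup>2 \<le> (norm (A$i))\<^sup>2 * (norm (column j B))\<^sup>2"
      by (simp add: power_mult_distrib)
  qed
  also have "\<dots> = (norm A)\<^sup>2 * (norm B)\<^sup>2"
    by (simp add: sum_distrib_left[symmetric] sum_distrib_right[symmetric] norm_column_sum norm_sq_mat)
  finally have "(norm (A ** B))\<^sup>2 \<le> (norm A * norm B)\<^sup>2" by (simp add: power_mult_distrib)
  thus ?thesis by (rule power2_le_imp_le) simp
qed

lemma stiefel_norm: "X \<in> stiefel \<Longrightarrow> norm (X::real^'r^'d) = sqrt (real CARD('r))"
proof -
  assume "X \<in> stiefel"
  hence e: "transpose X ** X = mat 1" by (simp add: stiefel_def)
  have "(norm X)\<^sup>2 = (\<Sum>j\<in>UNIV. \<Sum>i\<in>UNIV. (X$i$j)\<^sup>2)"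
    unfolding norm_sq_mat2 by (rule sum.swap)
  also have "\<dots> = (\<Sum>j\<in>(UNIV::'r set). (transpose X ** X)$j$j)"
    by (simp add: matrix_matrix_mult_def transpose_def power2_eq_square)
  also have "\<dots> = real CARD('r)" by (simp add: e mat_def)
  finally show ?thesis by (simp add: real_sqrt_unique)
qed

definition hub :: "real \<Rightarrow> 'a::real_inner \<Rightarrow> real" where
  "hub c v = (if norm v \<ge> c then norm v else (norm v)\<^sup>2 / (2*c) + c/2)"
definition hgr :: "real \<Rightarrow> 'a::real_inner \<Rightarrow> 'a" where
  "hgr c v = (if norm v \<ge> c then (1 / norm v) *\<^sub>R v else (1/c) *\<^sub>R v)"

lemma hgr_norm: "0 < c \<Longrightarrow> norm (hgr c v) \<le> 1"
  by (auto simp: hgr_def divide_simps)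

lemma amgm_c: "0 < c \<Longrightarrow> (b::real) \<le> b\<^sup>2/(2*c) + c/2"
proof -
  assume c: "0 < c"
  have "0 \<le> (b - c)\<^sup>2" by simp
  hence "2*c*b \<le> b\<^sup>2 + c\<^sup>2" by (simp add: power2_eq_square algebra_simps)
  thus ?thesis using c by (simp add: field_simps power2_eq_square)
qed

lemma hub_ge_norm: "0 < c \<Longrightarrow> norm v \<le> hub c v"
  using amgm_c[of c "norm v"] by (auto simp: hub_def)

lemma hub_up_r1:
  fixes a b c p :: real
  assumes c: "0 < c" "c \<le> a" "c \<le> b" and p: "p \<le> a*b"
  shows "b \<le> p/a + (a\<^sup>2+b\<^sup>2-2*p)/(2*c)"
proof -
  define t where "t = a*b - p"
  have t: "0 \<le> t" using p by (simp add: t_def)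
  have a: "0 < a" using c by simp
  have "p/a = b - t/a" using a by (simp add: t_def field_simps)
  moreover have "(a\<^sup>2+b\<^sup>2-2*p)/(2*c) = (a-b)\<^sup>2/(2*c) + t/c"
    using c by (simp add: t_def field_simps power2_eq_square)
  moreover have "t/a \<le> t/c" using t c by (simp add: divide_left_mono)
  moreover have "0 \<le> (a-b)\<^sup>2/(2*c)" using c by simp
  ultimately show ?thesis by linarith
qed

lemma hub_up_r2:
  fixes a b c p :: real
  assumes c: "0 < c" "c \<le> a" "b < c" "0 \<le> b" and p: "p \<le> a*b"
  shows "b\<^sup>2/(2*c) + c/2 \<le> p/a + (a\<^sup>2+b\<^sup>2-2*p)/(2*c)"
proof -
  have a: "0 < a" using c by simp
  have "p*(1/a - 1/c) \<ge> a*b*(1/a - 1/c)"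
    using p c a by (intro mult_right_mono_neg) (auto simp: divide_simps)
  moreover have "a*b*(1/a - 1/c) \<ge> c - a"
  proof -
    have "a*b*(1/a-1/c) = b*(1 - a/c)" using a by (simp add: field_simps)
    moreover have "b*(1-a/c) \<ge> c*(1-a/c)"
      using c by (intro mult_right_mono_neg) (auto simp: divide_simps)
    moreover have "c*(1-a/c) = c - a" using c by (simp add: field_simps)
    ultimately show ?thesis by linarith
  qed
  moreover have "(a-c)\<^sup>2/(2*c) \<ge> 0" using c by simp
  moreover have "p/a + (a\<^sup>2+b\<^sup>2-2*p)/(2*c) - (b\<^sup>2/(2*c) + c/2)
      = p*(1/a - 1/c) - (c - a) + (a-c)\<^sup>2/(2*c)"
    using a c by (simp add: field_simps power2_eq_square)
  ultimately show ?thesis by linarith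
qed

lemma hub_upper:
  fixes v w :: "'a::real_inner"
  assumes c: "0 < c"
  shows "hub c w \<le> hub c v + hgr c v \<bullet> (w - v) + (norm (w - v))\<^sup>2 / (2*c)"
proof -
  define a b p where "a = norm v" "b = norm w" "p = v \<bullet> w"
  have pab: "p \<le> a*b" unfolding a_b_p_def by (simp add: norm_cauchy_schwarz)
  have nwv: "(norm (w - v))\<^sup>2 = a\<^sup>2 + b\<^sup>2 - 2*p"
    unfolding a_b_p_def by (simp add: power2_norm_eq_inner inner_diff algebra_simps inner_commute)
  have b0: "0 \<le> b" unfolding a_b_p_def by simp
  show ?thesis
  proof (cases "a \<ge> c")
    case True
    hence a0: "0 < a" using c by simp
    have g: "hgr c v \<bullet> (w - v) = (p - a\<^sup>2)/a"
      using True a0 unfolding a_b_p_def hgr_def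
      by (simp add: inner_diff_right power2_norm_eq_inner field_simps)
    have hv: "hub c v = a" using True unfolding hub_def a_b_p_def by simp
    have e: "a + (p - a\<^sup>2)/a = p/a" using a0 by (simp add: field_simps power2_eq_square)
    show ?thesis
    proof (cases "b \<ge> c")
      case True
      hence "hub c w = b" unfolding hub_def a_b_p_def by simp
      thus ?thesis using hub_up_r1[OF c \<open>a\<ge>c\<close> True pab] hv g nwv e by simp
    next
      case False
      hence "hub c w = b\<^sup>2/(2*c) + c/2" unfolding hub_def a_b_p_def by simp
      thus ?thesis using hub_up_r2[OF c \<open>a\<ge>c\<close> _ b0 pab] False hv g nwv e by simp
    qed
  next
    case False
    have g: "hgr c v \<bullet> (w - v) = (p - a\<^sup>2)/c"
      using False c unfolding a_b_p_def hgr_def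
      by (simp add: inner_diff_right power2_norm_eq_inner field_simps)
    have hv: "hub c v = a\<^sup>2/(2*c) + c/2" using False unfolding hub_def a_b_p_def by simp
    have hw: "hub c w \<le> b\<^sup>2/(2*c) + c/2"
      unfolding hub_def a_b_p_def using amgm_c[OF c, of "norm w"] by auto
    have "a\<^sup>2/(2*c) + c/2 + (p - a\<^sup>2)/c + (a\<^sup>2 + b\<^sup>2 - 2*p)/(2*c) = b\<^sup>2/(2*c) + c/2"
      using c by (simp add: field_simps)
    thus ?thesis using hw hv g nwv by simp
  qed
qed

lemma hub_low_r:
  fixes a b c p :: real
  assumes c: "0 < c" "0 \<le> a" "a < c" "c \<le> b" and p: "p \<le> a*b"
  shows "c/2 - a\<^sup>2/(2*c) + p/c \<le> b"
proof -
  have "p/c \<le> a*b/c" using p c by (simp add: divide_right_mono)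
  moreover have "c/2 - a\<^sup>2/(2*c) + a*b/c \<le> b"
  proof -
    have "0 \<le> (c - a)*(c - a)" by simp
    have "(c-a)*(b-c) \<ge> 0" using c by simp
    hence "2*c*b - (c*c - a*a + 2*a*b) \<ge> (c-a)*(c-a)"
      by (simp add: algebra_simps)
    hence "c*c - a*a + 2*a*b \<le> 2*c*b" by (smt (verit) mult_nonneg_nonneg \<open>0 \<le> (c-a)*(c-a)\<close>)
    thus ?thesis using c by (simp add: field_simps power2_eq_square)
  qed
  ultimately show ?thesis by linarith
qed

lemma hub_lower:
  fixes v w :: "'a::real_inner"
  assumes c: "0 < c"
  shows "hub c v + hgr c v \<bullet> (w - v) \<le> hub c w"
proof -
  define a b p where "a = norm v" "b = norm w" "p = v \<bullet> w"
  have pab: "p \<le> a*b" unfolding a_b_p_def by (simp add: norm_cauchy_schwarz)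
  have a0': "0 \<le> a" unfolding a_b_p_def by simp
  have hb: "b \<le> hub c w" unfolding a_b_p_def by (rule hub_ge_norm[OF c])
  show ?thesis
  proof (cases "a \<ge> c")
    case True
    hence a0: "0 < a" using c by simp
    have g: "hgr c v \<bullet> (w - v) = (p - a\<^sup>2)/a"
      using True a0 unfolding a_b_p_def hgr_def
      by (simp add: inner_diff_right power2_norm_eq_inner field_simps)
    have hv: "hub c v = a" using True unfolding hub_def a_b_p_def by simp
    have e: "a + (p - a\<^sup>2)/a = p/a" using a0 by (simp add: field_simps power2_eq_square)
    have "p/a \<le> b" using pab a0 by (simp add: divide_simps mult.commute)
    thus ?thesis using hv g e hb by simp
  next
    case False
    have g: "hgr c v \<bullet> (w - v) = (p - a\<^sup>2)/c"
      using False c unfolding a_b_p_def hgr_def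
      by (simp add: inner_diff_right power2_norm_eq_inner field_simps)
    have hv: "hub c v = a\<^sup>2/(2*c) + c/2" using False unfolding hub_def a_b_p_def by simp
    have e: "a\<^sup>2/(2*c) + c/2 + (p - a\<^sup>2)/c = c/2 - a\<^sup>2/(2*c) + p/c"
      using c by (simp add: field_simps)
    show ?thesis
    proof (cases "b \<ge> c")
      case True
      thus ?thesis using hub_low_r[OF c a0' _ True pab] False hv g e hb by simp
    next
      case False
      hence hw: "hub c w = b\<^sup>2/(2*c) + c/2" unfolding hub_def a_b_p_def by simp
      have "0 \<le> (norm (w - v))\<^sup>2 / (2*c)" using c by simp
      moreover have "(norm (w - v))\<^sup>2 = a\<^sup>2 + b\<^sup>2 - 2*p"
        unfolding a_b_p_def by (simp add: power2_norm_eq_inner inner_diff algebra_simps inner_commute)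
      moreover have "c/2 - a\<^sup>2/(2*c) + p/c + (a\<^sup>2 + b\<^sup>2 - 2*p)/(2*c) = b\<^sup>2/(2*c) + c/2"
        using c by (simp add: field_simps)
      ultimately show ?thesis using hv g e hw
        by (smt (verit, ccfv_SIG) c divide_nonneg_nonneg)
    qed
  qed
qed

lemma transpose_add: "transpose (A + B) = transpose A + transpose (B::real^'n^'m)"
  by (simp add: transpose_def vec_eq_iff)
lemma matrix_add_rdistrib: "((A + B) ** C) = (A ** C) + (B ** (C::real^'p^'n))" for A B :: "real^'n^'m"
  by (simp add: matrix_matrix_mult_def vec_eq_iff sum.distrib[symmetric] algebra_simps)
lemma matrix_diff_rdistrib: "((A - B) ** C) = (A ** C) - (B ** (C::real^'p^'n))" for A B :: "real^'n^'m"
  by (simp add: matrix_matrix_mult_def vec_eq_iff sum_subtractf[symmetric] algebra_simps)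
lemma matrix_neg_l: "((- A) ** C) = - (A ** (C::real^'p^'n))" for A :: "real^'n^'m"
  by (simp add: matrix_matrix_mult_def vec_eq_iff sum_negf[symmetric])

definition Bm :: "real \<Rightarrow> real^'d^'d \<Rightarrow> real^'r^'d \<Rightarrow> real^'d^'d" where
  "Bm \<rho> Sh X = (2*\<rho>) *\<^sub>R ((mat 1 - X ** transpose X) ** Sh)"
definition Bd :: "real \<Rightarrow> real^'d^'d \<Rightarrow> real^'r^'d \<Rightarrow> real^'r^'d \<Rightarrow> real^'d^'d" where
  "Bd \<rho> Sh X D = - ((2*\<rho>) *\<^sub>R ((D ** transpose X + X ** transpose D) ** Sh))"
definition Brem :: "real \<Rightarrow> real^'d^'d \<Rightarrow> real^'r^'d \<Rightarrow> real^'d^'d" where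
  "Brem \<rho> Sh D = - ((2*\<rho>) *\<^sub>R ((D ** transpose D) ** Sh))"

lemma Bm_expand: "Bm \<rho> Sh (X + D) = Bm \<rho> Sh X + Bd \<rho> Sh X D + Brem \<rho> Sh D"
proof -
  have "(X + D) ** transpose (X + D) = X ** transpose X + (D ** transpose X + X ** transpose D) + D ** transpose D"
    by (simp add: transpose_add matrix_add_ldistrib matrix_add_rdistrib algebra_simps)
  thus ?thesis
    unfolding Bm_def Bd_def Brem_def
    by (simp add: matrix_diff_rdistrib matrix_add_rdistrib algebra_simps scaleR_diff_right)
qed

lemma wsm_hub: "\<rho> > 0 \<Longrightarrow> \<mu> > 0 \<Longrightarrow> wsm \<rho> Sh X \<mu> = hub (\<mu>*\<rho>) (Bm \<rho> Sh X)"
  unfolding wsm_def wfun_def hub_def Bm_def by (simp add: mult.assoc)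

lemma Bd_linear: "linear (Bd \<rho> Sh X)"
proof (rule linearI)
  fix D1 D2 show "Bd \<rho> Sh X (D1 + D2) = Bd \<rho> Sh X D1 + Bd \<rho> Sh X D2"
    unfolding Bd_def by (simp add: transpose_add matrix_add_ldistrib matrix_add_rdistrib algebra_simps)
next
  fix k D show "Bd \<rho> Sh X (k *\<^sub>R D) = k *\<^sub>R Bd \<rho> Sh X D"
    unfolding Bd_def
    by (simp add: transpose_scalar matrix_scalar_ac scalar_matrix_assoc[symmetric]
        matrix_add_rdistrib scaleR_add_right scaleR_diff_right mult_ac)
qed

lemma Bd_norm: "\<rho> > 0 \<Longrightarrow> norm (Bd \<rho> Sh X D) \<le> 2*\<rho>*(2*norm X*norm D)*norm Sh"
proof -
  assume r: "\<rho> > 0"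
  have "norm ((D ** transpose X + X ** transpose D) ** Sh) \<le> norm (D ** transpose X + X ** transpose D) * norm Sh"
    by (rule norm_mat_mult)
  also have "\<dots> \<le> (2*norm X*norm D) * norm Sh"
  proof (rule mult_right_mono)
    have "norm (D ** transpose X + X ** transpose D) \<le> norm (D ** transpose X) + norm (X ** transpose D)"
      by (rule norm_triangle_ineq)
    also have "\<dots> \<le> norm D * norm X + norm X * norm D"
    proof -
      have a1: "norm (D ** transpose X) \<le> norm D * norm X"
        using norm_mat_mult[of D "transpose X"] by (simp add: norm_transpose)
      have a2: "norm (X ** transpose D) \<le> norm X * norm D"
        using norm_mat_mult[of X "transpose D"] by (simp add: norm_transpose)
      show ?thesis using a1 a2 by linarith
    qed
    also have "\<dots> = 2*norm X*norm D" by simp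
    finally show "norm (D ** transpose X + X ** transpose D) \<le> 2*norm X*norm D" by simp
  qed simp
  finally show ?thesis using r unfolding Bd_def by (simp add: mult_ac)
qed

lemma Brem_norm: "\<rho> > 0 \<Longrightarrow> norm (Brem \<rho> Sh D) \<le> 2*\<rho>*(norm D)\<^sup>2*norm Sh"
proof -
  assume r: "\<rho> > 0"
  have "norm ((D ** transpose D) ** Sh) \<le> norm (D ** transpose D) * norm Sh" by (rule norm_mat_mult)
  also have "\<dots> \<le> (norm D)\<^sup>2 * norm Sh"
    using norm_mat_mult[of D "transpose D"] by (simp add: norm_transpose mult_right_mono power2_eq_square)
  finally show ?thesis using r unfolding Brem_def by (simp add: mult.assoc)
qed

lemma linear_riesz: "linear (f::'a::euclidean_space \<Rightarrow> real) \<Longrightarrow> f h = (\<Sum>b\<in>Basis. f b *\<^sub>R b) \<bullet> h"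
proof -
  assume l: "linear f"
  have "f h = f (\<Sum>b\<in>Basis. (h \<bullet> b) *\<^sub>R b)" by (simp add: euclidean_representation)
  also have "\<dots> = (\<Sum>b\<in>Basis. (h \<bullet> b) * f b)"
    by (simp add: linear_sum[OF l] linear_scale[OF l] o_def)
  moreover have "(\<Sum>b\<in>Basis. f b *\<^sub>R b) \<bullet> h = (\<Sum>b\<in>Basis. f b * (b \<bullet> h))"
    by (simp add: inner_sum_left)
  moreover have "(\<Sum>b\<in>Basis. (h \<bullet> b) * f b) = (\<Sum>b\<in>Basis. f b * (b \<bullet> h))"
    by (simp add: inner_commute mult.commute)
  ultimately show ?thesis by simp
qed

definition Gw :: "real \<Rightarrow> real^'d^'d \<Rightarrow> real^'r^'d \<Rightarrow> real \<Rightarrow> real^'r^'d" where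
  "Gw \<rho> Sh X \<mu> = (\<Sum>b\<in>Basis. (hgr (\<mu>*\<rho>) (Bm \<rho> Sh X) \<bullet> Bd \<rho> Sh X b) *\<^sub>R b)"

lemma Gw_inner: "Gw \<rho> Sh X \<mu> \<bullet> D = hgr (\<mu>*\<rho>) (Bm \<rho> Sh X) \<bullet> Bd \<rho> Sh X D"
proof -
  have "linear (\<lambda>D. hgr (\<mu>*\<rho>) (Bm \<rho> Sh X) \<bullet> Bd \<rho> Sh X D)"
    using Bd_linear[of \<rho> Sh X] by (simp add: linear_iff inner_add_right)
  from linear_riesz[OF this, of D] show ?thesis unfolding Gw_def by simp
qed

lemma Gw_norm:
  assumes r: "\<rho> > 0" and m: "\<mu> > 0"
  shows "norm (Gw \<rho> Sh X \<mu>) \<le> 4*\<rho>*norm X*norm Sh"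
proof -
  define G where "G = Gw \<rho> Sh X \<mu>"
  have "(norm G)\<^sup>2 = G \<bullet> G" by (simp add: power2_norm_eq_inner)
  also have "\<dots> = hgr (\<mu>*\<rho>) (Bm \<rho> Sh X) \<bullet> Bd \<rho> Sh X G" unfolding G_def by (rule Gw_inner)
  also have "\<dots> \<le> norm (hgr (\<mu>*\<rho>) (Bm \<rho> Sh X)) * norm (Bd \<rho> Sh X G)" by (rule norm_cauchy_schwarz)
  also have "\<dots> \<le> 1 * (2*\<rho>*(2*norm X*norm G)*norm Sh)"
    using hgr_norm[of "\<mu>*\<rho>" "Bm \<rho> Sh X"] Bd_norm[OF r, of Sh X G] r m
    by (intro mult_mono) auto
  finally have "(norm G)\<^sup>2 \<le> (4*\<rho>*norm X*norm Sh) * norm G" by (simp add: algebra_simps)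
  hence "norm G * norm G \<le> (4*\<rho>*norm X*norm Sh) * norm G" by (simp add: power2_eq_square)
  hence "norm G = 0 \<or> norm G \<le> 4*\<rho>*norm X*norm Sh"
    using mult_right_le_imp_le[of "norm G" "norm G" "4*\<rho>*norm X*norm Sh"] by force
  moreover have "0 \<le> 4*\<rho>*norm X*norm Sh" using r by simp
  ultimately show ?thesis unfolding G_def by linarith
qed

lemma W_bounds:
  fixes X D :: "real^'r^'d" and Sh :: "real^'d^'d"
  assumes r: "\<rho> > 0" and m: "\<mu> > 0" and D1: "norm D \<le> 1"
  defines "W \<equiv> (\<lambda>Y. hub (\<mu>*\<rho>) (Bm \<rho> Sh Y))"
  shows "W (X + D) - W X - Gw \<rho> Sh X \<mu> \<bullet> D \<le> (2*\<rho>*(norm Sh)\<^sup>2*(2*norm X+1)\<^sup>2/\<mu> + 2*\<rho>*norm Sh) * (norm D)\<^sup>2"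
    and "W (X + D) - W X - Gw \<rho> Sh X \<mu> \<bullet> D \<ge> - ((2*\<rho>*norm Sh) * (norm D)\<^sup>2)"
proof -
  define c where "c = \<mu>*\<rho>"
  have c: "c > 0" using r m by (simp add: c_def)
  define v where "v = Bm \<rho> Sh X"
  define w where "w = Bm \<rho> Sh (X + D)"
  have wv: "w - v = Bd \<rho> Sh X D + Brem \<rho> Sh D" unfolding w_def v_def Bm_expand by simp
  have g: "hgr c v \<bullet> (w - v) = Gw \<rho> Sh X \<mu> \<bullet> D + hgr c v \<bullet> Brem \<rho> Sh D"
    by (simp only: wv inner_add_right, simp add: Gw_inner c_def v_def)
  have rb: "\<bar>hgr c v \<bullet> Brem \<rho> Sh D\<bar> \<le> 2*\<rho>*(norm D)\<^sup>2*norm Sh"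
  proof -
    have "\<bar>hgr c v \<bullet> Brem \<rho> Sh D\<bar> \<le> norm (hgr c v) * norm (Brem \<rho> Sh D)" by (rule Cauchy_Schwarz_ineq2)
    also have "\<dots> \<le> 1 * (2*\<rho>*(norm D)\<^sup>2*norm Sh)"
      using hgr_norm[OF c, of v] Brem_norm[OF r, of Sh D] by (intro mult_mono) auto
    finally show ?thesis by simp
  qed
  have W: "W (X + D) = hub c w" "W X = hub c v" unfolding W_def c_def w_def v_def by simp_all
  have "norm D * norm D \<le> 1 * norm D" by (rule mult_right_mono[OF D1]) simp
  hence nD2: "(norm D)\<^sup>2 \<le> norm D" by (simp add: power2_eq_square)
  have nwv: "norm (w - v) \<le> 2*\<rho>*norm Sh*(2*norm X+1)*norm D"
  proof -
    have "norm (w - v) \<le> norm (Bd \<rho> Sh X D) + norm (Brem \<rho> Sh D)" unfolding wv by (rule norm_triangle_ineq)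
    also have "\<dots> \<le> 2*\<rho>*(2*norm X*norm D)*norm Sh + 2*\<rho>*(norm D)\<^sup>2*norm Sh"
      using Bd_norm[OF r] Brem_norm[OF r] by (rule add_mono)
    also have "\<dots> \<le> 2*\<rho>*(2*norm X*norm D)*norm Sh + 2*\<rho>*(norm D)*norm Sh"
      using nD2 r by (simp add: mult_right_mono)
    also have "\<dots> = 2*\<rho>*norm Sh*(2*norm X+1)*norm D" by (simp add: algebra_simps)
    finally show ?thesis .
  qed
  have "(norm (w - v))\<^sup>2 / (2*c) \<le> (2*\<rho>*norm Sh*(2*norm X+1)*norm D)\<^sup>2 / (2*c)"
    using nwv c by (intro divide_right_mono power_mono) auto
  also have "\<dots> = 2*\<rho>*(norm Sh)\<^sup>2*(2*norm X+1)\<^sup>2/\<mu> * (norm D)\<^sup>2"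
    using r m unfolding c_def by (simp add: field_simps power2_eq_square)
  finally have q: "(norm (w - v))\<^sup>2 / (2*c) \<le> 2*\<rho>*(norm Sh)\<^sup>2*(2*norm X+1)\<^sup>2/\<mu> * (norm D)\<^sup>2" .
  have up: "hub c w \<le> hub c v + hgr c v \<bullet> (w - v) + (norm (w - v))\<^sup>2 / (2*c)" by (rule hub_upper[OF c])
  have lo: "hub c v + hgr c v \<bullet> (w - v) \<le> hub c w" by (rule hub_lower[OF c])
  show "W (X + D) - W X - Gw \<rho> Sh X \<mu> \<bullet> D \<le> (2*\<rho>*(norm Sh)\<^sup>2*(2*norm X+1)\<^sup>2/\<mu> + 2*\<rho>*norm Sh) * (norm D)\<^sup>2"
    using up q rb g W by (simp add: algebra_simps)
  show "W (X + D) - W X - Gw \<rho> Sh X \<mu> \<bullet> D \<ge> - ((2*\<rho>*norm Sh) * (norm D)\<^sup>2)"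
    using lo rb g W by (simp add: algebra_simps)
qed

lemma quad_deriv:
  fixes f :: "'a::real_inner \<Rightarrow> real"
  assumes q: "\<And>D. norm D \<le> 1 \<Longrightarrow> \<bar>f (x + D) - f x - G \<bullet> D\<bar> \<le> K * (norm D)\<^sup>2"
  shows "(f has_derivative (\<lambda>h. G \<bullet> h)) (at x)"
  unfolding has_derivative_at_alt
proof (intro conjI allI impI)
  show "bounded_linear ((\<bullet>) G)" by (rule bounded_linear_inner_right)
  fix e :: real assume e: "e > 0"
  define d where "d = min 1 (e / (\<bar>K\<bar> + 1))"
  have d: "d > 0" using e by (simp add: d_def)
  show "\<exists>d>0. \<forall>y. norm (y - x) < d \<longrightarrow> norm (f y - f x - G \<bullet> (y - x)) \<le> e * norm (y - x)"
  proof (intro exI conjI allI impI, fact d)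
    fix y assume y: "norm (y - x) < d"
    define D where "D = y - x"
    have D1: "norm D \<le> 1" using y by (simp add: D_def d_def)
    have De: "norm D * (\<bar>K\<bar> + 1) \<le> e" using y unfolding D_def d_def
      by (simp add: field_simps)
    have "\<bar>f (x + D) - f x - G \<bullet> D\<bar> \<le> K * (norm D)\<^sup>2" by (rule q[OF D1])
    also have "\<dots> \<le> (\<bar>K\<bar> + 1) * (norm D)\<^sup>2" by (rule mult_right_mono) auto
    also have "\<dots> = (norm D * (\<bar>K\<bar> + 1)) * norm D" by (simp add: power2_eq_square mult_ac)
    also have "\<dots> \<le> e * norm D" using De by (simp add: mult_right_mono)
    finally show "norm (f y - f x - G \<bullet> (y - x)) \<le> e * norm (y - x)" unfolding D_def by simp
  qed
qed

lemma W_deriv: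
  fixes X :: "real^'r^'d"
  assumes r: "\<rho> > 0" and m: "\<mu> > 0"
  shows "((\<lambda>Y. wsm \<rho> Sh Y \<mu>) has_derivative (\<lambda>h. Gw \<rho> Sh X \<mu> \<bullet> h)) (at X)"
proof (rule quad_deriv)
  fix D :: "real^'r^'d" assume D1: "norm D \<le> 1"
  define K where "K = 2*\<rho>*(norm Sh)\<^sup>2*(2*norm X+1)\<^sup>2/\<mu> + 2*\<rho>*norm Sh"
  have K2: "2*\<rho>*norm Sh \<le> K" using r m by (simp add: K_def)
  note b = W_bounds[OF r m D1, where Sh=Sh and X=X]
  have K3: "(2*\<rho>*norm Sh) * (norm D)\<^sup>2 \<le> K * (norm D)\<^sup>2" using K2 by (rule mult_right_mono) simp
  show "\<bar>wsm \<rho> Sh (X + D) \<mu> - wsm \<rho> Sh X \<mu> - Gw \<rho> Sh X \<mu> \<bullet> D\<bar> \<le> K * (norm D)\<^sup>2"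
    unfolding wsm_hub[OF r m] using b K3 unfolding K_def abs_le_iff by (intro conjI) linarith+
qed

lemma egrad_unique:
  assumes "(f has_derivative (\<lambda>h. G \<bullet> h)) (at x)"
  shows "egrad f x = G"
  unfolding egrad_def
proof (rule the_equality)
  show "(f has_derivative (\<lambda>h. G \<bullet> h)) (at x)" by (rule assms)
  fix G' assume "(f has_derivative (\<lambda>h. G' \<bullet> h)) (at x)"
  from has_derivative_unique[OF this assms] have "\<And>h. G' \<bullet> h = G \<bullet> h" by metis
  from this[of "G' - G"] this[of "G' - G"] show "G' = G"
    by (metis inner_diff_left inner_eq_zero_iff right_minus_eq)
qed

lemma gsm_deriv:
  fixes X :: "real^'r^'d"
  assumes r: "\<rho> > 0" and m: "\<mu> > 0" and ug: "\<forall>Y. (u has_derivative (\<lambda>H. gu Y \<bullet> H)) (at Y)"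
  shows "((\<lambda>Y. gsm u \<rho> Sh Y \<mu>) has_derivative (\<lambda>h. (gu X + Gw \<rho> Sh X \<mu>) \<bullet> h)) (at X)"
    and "egrad (\<lambda>Y. gsm u \<rho> Sh Y \<mu>) X = gu X + Gw \<rho> Sh X \<mu>"
proof -
  have "((\<lambda>Y. u Y + wsm \<rho> Sh Y \<mu>) has_derivative (\<lambda>h. gu X \<bullet> h + Gw \<rho> Sh X \<mu> \<bullet> h)) (at X)"
    using ug W_deriv[OF r m] by (intro has_derivative_add) auto
  thus d: "((\<lambda>Y. gsm u \<rho> Sh Y \<mu>) has_derivative (\<lambda>h. (gu X + Gw \<rho> Sh X \<mu>) \<bullet> h)) (at X)"
    unfolding gsm_def by (simp add: inner_add_left)
  show "egrad (\<lambda>Y. gsm u \<rho> Sh Y \<mu>) X = gu X + Gw \<rho> Sh X \<mu>" by (rule egrad_unique[OF d])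
qed

lemma u_descent:
  fixes u :: "'a::real_inner \<Rightarrow> real"
  assumes ug: "\<forall>Y. (u has_derivative (\<lambda>H. gu Y \<bullet> H)) (at Y)"
    and ul: "\<forall>Y Z. norm (gu Y - gu Z) \<le> Lu * norm (Y - Z)" and L0: "0 \<le> Lu"
  shows "\<bar>u (X + D) - u X - gu X \<bullet> D\<bar> \<le> Lu * (norm D)\<^sup>2"
proof -
  define S where "S = cball X (norm D)"
  have "norm (u (X + D) - u X - (\<lambda>H. gu X \<bullet> H) (X + D - X)) \<le> norm (X + D - X) * (Lu * norm D)"
  proof (rule differentiable_bound_linearization[where S=S and f'="\<lambda>Y H. gu Y \<bullet> H"])
    fix t :: real assume "t \<in> {0..1}"
    thus "X + t *\<^sub>R (X + D - X) \<in> S" unfolding S_def by (auto simp: dist_norm mult_left_le_one_le)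
  next
    fix x assume "x \<in> S"
    show "(u has_derivative (\<lambda>H. gu x \<bullet> H)) (at x within S)"
      using ug by (auto intro: has_derivative_at_withinI)
  next
    fix x assume x: "x \<in> S"
    show "onorm ((\<lambda>H. gu x \<bullet> H) - (\<lambda>H. gu X \<bullet> H)) \<le> Lu * norm D"
    proof (rule onorm_bound)
      show "0 \<le> Lu * norm D" using L0 by simp
      fix h
      have "norm (((\<lambda>H. gu x \<bullet> H) - (\<lambda>H. gu X \<bullet> H)) h) = \<bar>(gu x - gu X) \<bullet> h\<bar>"
        by (simp add: inner_diff_left)
      also have "\<dots> \<le> norm (gu x - gu X) * norm h" by (rule Cauchy_Schwarz_ineq2)
      also have "\<dots> \<le> (Lu * norm D) * norm h"
      proof (rule mult_right_mono)
        have "norm (gu x - gu X) \<le> Lu * norm (x - X)" using ul by blast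
        moreover have "norm (x - X) \<le> norm D" using x unfolding S_def by (simp add: dist_norm norm_minus_commute)
        ultimately show "norm (gu x - gu X) \<le> Lu * norm D"
          by (meson L0 mult_left_mono order_trans)
      qed simp
      finally show "norm (((\<lambda>H. gu x \<bullet> H) - (\<lambda>H. gu X \<bullet> H)) h) \<le> Lu * norm D * norm h" .
    qed
  next
    show "X \<in> S" unfolding S_def by simp
  qed
  thus ?thesis by (simp add: power2_eq_square mult_ac)
qed

lemma cont_mm[continuous_intros]:
  fixes f :: "'a::topological_space \<Rightarrow> real^'n^'m" and g :: "'a \<Rightarrow> real^'p^'n"
  shows "continuous_on S f \<Longrightarrow> continuous_on S g \<Longrightarrow> continuous_on S (\<lambda>x. f x ** g x)"
  unfolding matrix_matrix_mult_def by (intro continuous_intros) auto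

lemma cont_tr[continuous_intros]:
  fixes f :: "'a::topological_space \<Rightarrow> real^'n^'m"
  shows "continuous_on S f \<Longrightarrow> continuous_on S (\<lambda>x. transpose (f x))"
  unfolding transpose_def by (intro continuous_intros) auto

definition Kset :: "real \<Rightarrow> ((real^'r^'d) \<times> (real^'r^'d)) set" where
  "Kset Bv = {p. fst p \<in> stiefel \<and> snd p \<in> tangent (fst p) \<and> norm (snd p) \<le> Bv}"

lemma Kset_compact: "compact (Kset Bv :: ((real^'r^'d) \<times> (real^'r^'d)) set)"
proof -
  have eq: "(Kset Bv :: ((real^'r^'d) \<times> (real^'r^'d)) set) =
     {p. transpose (fst p) ** fst p = mat 1} \<inter>
     {p. transpose (fst p) ** snd p + transpose (snd p) ** fst p = 0} \<inter> {p. norm (snd p) \<le> Bv}"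
    unfolding Kset_def stiefel_def tangent_def by auto
  have cl: "closed (Kset Bv :: ((real^'r^'d) \<times> (real^'r^'d)) set)"
    unfolding eq
    by (intro closed_Int closed_Collect_eq closed_Collect_le continuous_intros continuous_on_fst continuous_on_snd continuous_on_id)
  have bd: "bounded (Kset Bv :: ((real^'r^'d) \<times> (real^'r^'d)) set)"
    unfolding bounded_iff
  proof (intro exI ballI)
    fix p :: "(real^'r^'d) \<times> (real^'r^'d)" assume "p \<in> Kset Bv"
    hence "norm (fst p) = sqrt (real CARD('r))" "norm (snd p) \<le> Bv"
      unfolding Kset_def by (auto simp: stiefel_norm)
    thus "norm p \<le> sqrt (real CARD('r)) + Bv"
      using norm_Pair_le[of "fst p" "snd p"] by simp
  qed
  show ?thesis using cl bd by (simp add: compact_eq_bounded_closed)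
qed

lemma tangent_scale: "D \<in> tangent X \<Longrightarrow> t *\<^sub>R D \<in> tangent X"
  unfolding tangent_def
  by (simp add: matrix_scalar_ac transpose_scalar scalar_matrix_assoc[symmetric] scaleR_add_right[symmetric])

lemma linear_expand_bound:
  fixes L :: "'a::euclidean_space \<Rightarrow> 'b::real_normed_vector"
  assumes l: "linear L" and C: "\<And>b. b \<in> Basis \<Longrightarrow> norm (L b) \<le> C"
  shows "norm (L k) \<le> real (card (Basis::'a set)) * C * norm k"
proof -
  have "L k = L (\<Sum>b\<in>Basis. (k \<bullet> b) *\<^sub>R b)" by (simp add: euclidean_representation)
  also have "\<dots> = (\<Sum>b\<in>Basis. (k \<bullet> b) *\<^sub>R L b)"
    by (simp add: linear_sum[OF l] linear_scale[OF l] o_def)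
  finally have "norm (L k) \<le> (\<Sum>b\<in>Basis. norm ((k \<bullet> b) *\<^sub>R L b))"
    using norm_sum[of "\<lambda>b. (k \<bullet> b) *\<^sub>R L b" Basis] by simp
  also have "\<dots> \<le> (\<Sum>b\<in>(Basis::'a set). norm k * C)"
  proof (rule sum_mono)
    fix b :: 'a assume b: "b \<in> Basis"
    have "norm ((k \<bullet> b) *\<^sub>R L b) = \<bar>k \<bullet> b\<bar> * norm (L b)" by simp
    also have "\<dots> \<le> norm k * C"
      using Basis_le_norm[OF b, of k] C[OF b] by (intro mult_mono) auto
    finally show "norm ((k \<bullet> b) *\<^sub>R L b) \<le> norm k * C" .
  qed
  also have "\<dots> = real (card (Basis::'a set)) * C * norm k" by simp
  finally show ?thesis .
qed

lemma transpose_zero: "transpose (0::real^'n^'m) = 0" by (simp add: transpose_def vec_eq_iff)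
lemma zero_tangent: "0 \<in> tangent X" unfolding tangent_def by (simp add: transpose_zero)

lemma retr_deriv_id:
  fixes R :: "real^'r^'d \<Rightarrow> real^'r^'d \<Rightarrow> real^'r^'d"
    and F :: "(real^'r^'d) \<times> (real^'r^'d) \<Rightarrow> real^'r^'d"
  assumes FR: "\<forall>(X, D) \<in> tangent_bundle. F (X, D) = R X D"
    and X: "X \<in> stiefel" and D: "D \<in> tangent X"
    and Rd: "(R X has_derivative id) (at 0 within tangent X)"
    and Fd: "(F has_derivative L0) (at (X, 0))"
  shows "L0 (0, D) = D"
proof -
  have eq: "\<And>t. F (X, t *\<^sub>R D) = R X (t *\<^sub>R D)"
    using FR X tangent_scale[OF D] unfolding tangent_bundle_def by auto
  have h1: "((\<lambda>t::real. (X, t *\<^sub>R D)) has_derivative (\<lambda>t. (0, t *\<^sub>R D))) (at 0)"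
    by (intro derivative_eq_intros) auto
  have d1: "((\<lambda>t::real. F (X, t *\<^sub>R D)) has_derivative (\<lambda>t. L0 (0, t *\<^sub>R D))) (at 0)"
    using has_derivative_compose[OF h1, of F L0] Fd by simp
  have h2: "((\<lambda>t::real. t *\<^sub>R D) has_derivative (\<lambda>t. t *\<^sub>R D)) (at 0 within UNIV)"
    by (intro derivative_eq_intros) auto
  have sub: "(\<lambda>t::real. t *\<^sub>R D) ` UNIV \<subseteq> tangent X" using tangent_scale[OF D] by auto
  have Rd': "(R X has_derivative id) (at ((\<lambda>t::real. t *\<^sub>R D) 0) within (\<lambda>t::real. t *\<^sub>R D) ` UNIV)"
    using has_derivative_subset[OF Rd sub] by simp
  have d2: "((\<lambda>t::real. R X (t *\<^sub>R D)) has_derivative (\<lambda>t. t *\<^sub>R D)) (at 0)"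
    using diff_chain_within[OF h2 Rd'] by (simp add: o_def)
  have d1': "((\<lambda>t::real. R X (t *\<^sub>R D)) has_derivative (\<lambda>t. L0 (0, t *\<^sub>R D))) (at 0)"
    using d1 by (simp add: eq)
  from has_derivative_unique[OF d1' d2] have "(\<lambda>t::real. L0 (0, t *\<^sub>R D)) = (\<lambda>t. t *\<^sub>R D)" .
  from fun_cong[OF this, of 1] show ?thesis by simp
qed

lemma retr_bound:
  fixes R :: "real^'r^'d \<Rightarrow> real^'r^'d \<Rightarrow> real^'r^'d"
  assumes retr: "retraction R" and Bv: "0 \<le> Bv"
  shows "\<exists>M\<ge>0. \<forall>X D. X \<in> stiefel \<longrightarrow> D \<in> tangent X \<longrightarrow> norm D \<le> Bv \<longrightarrow>
            norm (R X D - X - D) \<le> M * (norm D)\<^sup>2"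
proof -
  from retr obtain U and F :: "(real^'r^'d) \<times> (real^'r^'d) \<Rightarrow> real^'r^'d"
    where TU: "tangent_bundle \<subseteq> U" and sm: "smooth_on U F"
      and FR: "\<forall>(X, D) \<in> tangent_bundle. F (X, D) = R X D"
      and R0: "\<forall>X\<in>stiefel. R X 0 = X \<and> (R X has_derivative id) (at 0 within tangent X)"
    unfolding retraction_def by blast
  have C2: "Ck (Suc (Suc 0)) U F" using sm unfolding smooth_on_def by blast
  define \<Psi> where "\<Psi> b = (\<lambda>x. frechet_derivative F (at x) b)" for b
  have Fdiff: "\<forall>x\<in>U. F differentiable (at x)" and C1: "\<forall>h. Ck (Suc 0) U (\<Psi> h)"
    using C2 unfolding Ck.simps(2)[of "Suc 0"] \<Psi>_def by blast+
  have Pdiff: "\<And>b. \<forall>x\<in>U. \<Psi> b differentiable (at x)"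
    using C1 unfolding Ck.simps(2)[of 0] by blast
  have Pcont: "\<And>b b'. continuous_on U (\<lambda>x. frechet_derivative (\<Psi> b) (at x) b')"
    using C1 unfolding Ck.simps(2)[of 0] Ck.simps(1) by blast
  define K where "K = (Kset Bv :: ((real^'r^'d) \<times> (real^'r^'d)) set)"
  have KU: "K \<subseteq> U" using TU unfolding K_def Kset_def tangent_bundle_def by auto
  have cK: "compact K" unfolding K_def by (rule Kset_compact)
  have "\<forall>b\<in>Basis. \<forall>b'\<in>Basis. \<exists>C. \<forall>q\<in>K. norm (frechet_derivative (\<Psi> b) (at q) b') \<le> C"
  proof (intro ballI)
    fix b b' :: "(real^'r^'d) \<times> (real^'r^'d)"
    have "compact ((\<lambda>x. frechet_derivative (\<Psi> b) (at x) b') ` K)"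
      using continuous_on_subset[OF Pcont KU] cK by (intro compact_continuous_image)
    hence "bounded ((\<lambda>x. frechet_derivative (\<Psi> b) (at x) b') ` K)" by (rule compact_imp_bounded)
    thus "\<exists>C. \<forall>q\<in>K. norm (frechet_derivative (\<Psi> b) (at q) b') \<le> C" unfolding bounded_iff by auto
  qed
  then obtain Cf where Cf: "\<forall>b\<in>Basis. \<forall>b'\<in>Basis. \<forall>q\<in>K. norm (frechet_derivative (\<Psi> b) (at q) b') \<le> Cf b b'"
    by metis
  define C where "C = (\<Sum>b\<in>(Basis::((real^'r^'d) \<times> (real^'r^'d)) set). \<Sum>b'\<in>Basis. \<bar>Cf b b'\<bar>)"
  have C0: "0 \<le> C" unfolding C_def by (intro sum_nonneg) auto
  have CC: "\<And>b (b'::(real^'r^'d) \<times> (real^'r^'d)) q. b \<in> Basis \<Longrightarrow> b' \<in> Basis \<Longrightarrow> q \<in> K \<Longrightarrow> norm (frechet_derivative (\<Psi> b) (at q) b') \<le> C"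
  proof -
    fix b b' q assume b: "b \<in> (Basis::((real^'r^'d) \<times> (real^'r^'d)) set)" and b': "(b'::(real^'r^'d) \<times> (real^'r^'d)) \<in> Basis" and q: "q \<in> K"
    have "norm (frechet_derivative (\<Psi> b) (at q) b') \<le> \<bar>Cf b b'\<bar>" using Cf b b' q by fastforce
    also have "\<dots> \<le> (\<Sum>b'\<in>Basis. \<bar>Cf b b'\<bar>)"
      using b' by (intro member_le_sum) auto
    also have "\<dots> \<le> C" unfolding C_def using b by (intro member_le_sum[of b]) (auto intro: sum_nonneg)
    finally show "norm (frechet_derivative (\<Psi> b) (at q) b') \<le> C" .
  qed
  define N where "N = real (card (Basis::((real^'r^'d) \<times> (real^'r^'d)) set))"
  have N0: "0 \<le> N" unfolding N_def by simp
  have Lip: "\<And>b q0 q. b \<in> Basis \<Longrightarrow> closed_segment q0 q \<subseteq> K \<Longrightarrow> norm (\<Psi> b q - \<Psi> b q0) \<le> N * C * norm (q - q0)"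
  proof -
    fix b q0 q assume b: "b \<in> (Basis::((real^'r^'d) \<times> (real^'r^'d)) set)" and S: "closed_segment q0 q \<subseteq> K"
    show "norm (\<Psi> b q - \<Psi> b q0) \<le> N * C * norm (q - q0)"
    proof (rule differentiable_bound[where S="closed_segment q0 q" and f'="\<lambda>x. frechet_derivative (\<Psi> b) (at x)"])
      show "convex (closed_segment q0 q)" by simp
      show "q \<in> closed_segment q0 q" "q0 \<in> closed_segment q0 q" by auto
    next
      fix x assume x: "x \<in> closed_segment q0 q"
      hence xU: "x \<in> U" using S KU by auto
      have "(\<Psi> b has_derivative frechet_derivative (\<Psi> b) (at x)) (at x)"
        using Pdiff xU frechet_derivative_works by blast
      thus "(\<Psi> b has_derivative frechet_derivative (\<Psi> b) (at x)) (at x within closed_segment q0 q)"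
        by (rule has_derivative_at_withinI)
      hence lin: "linear (frechet_derivative (\<Psi> b) (at x))"
        using has_derivative_linear by blast
      show "onorm (frechet_derivative (\<Psi> b) (at x)) \<le> N * C"
      proof (rule onorm_bound)
        show "0 \<le> N * C" using N0 C0 by simp
        fix k
        show "norm (frechet_derivative (\<Psi> b) (at x) k) \<le> N * C * norm k"
          unfolding N_def using linear_expand_bound[OF lin, of C k] CC[OF b _] x S by blast
      qed
    qed
  qed
  show ?thesis
  proof (intro exI[of _ "N * N * C"] conjI allI impI)
    show "0 \<le> N * N * C" using N0 C0 by simp
    fix X D :: "real^'r^'d" assume X: "X \<in> stiefel" and D: "D \<in> tangent X" and DB: "norm D \<le> Bv"
    define q0 where "q0 = (X, 0 :: real^'r^'d)"
    define q1 where "q1 = (X, D)"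
    have segK: "closed_segment q0 q1 \<subseteq> K"
    proof
      fix x assume "x \<in> closed_segment q0 q1"
      then obtain u where u: "x = (1 - u) *\<^sub>R q0 + u *\<^sub>R q1" "0 \<le> u" "u \<le> 1"
        unfolding closed_segment_def by blast
      have "x = (X, u *\<^sub>R D)" unfolding u q0_def q1_def by (simp add: algebra_simps)
      moreover have "norm (u *\<^sub>R D) \<le> Bv" using u DB mult_right_mono[of u 1 "norm D"] by simp
      ultimately show "x \<in> K" unfolding K_def Kset_def using X tangent_scale[OF D] by simp
    qed
    have q0U: "q0 \<in> U" using segK KU by auto
    have Fd0: "(F has_derivative frechet_derivative F (at q0)) (at q0)"
      using Fdiff q0U frechet_derivative_works by blast
    have key: "frechet_derivative F (at q0) (0, D) = D"
      using retr_deriv_id[OF FR X D _ Fd0[unfolded q0_def]] R0 X by (simp add: q0_def)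
    have "norm (F q1 - F q0 - frechet_derivative F (at q0) (q1 - q0)) \<le> norm (q1 - q0) * (N * (N * C * norm D))"
    proof (rule differentiable_bound_linearization[where S="closed_segment q0 q1" and f'="\<lambda>x. frechet_derivative F (at x)"])
      fix t :: real assume "t \<in> {0..1}"
      thus "q0 + t *\<^sub>R (q1 - q0) \<in> closed_segment q0 q1"
        unfolding closed_segment_def by (auto intro!: exI[of _ t] simp: algebra_simps)
    next
      fix x assume x: "x \<in> closed_segment q0 q1"
      hence "x \<in> U" using segK KU by auto
      thus "(F has_derivative frechet_derivative F (at x)) (at x within closed_segment q0 q1)"
        using Fdiff frechet_derivative_works has_derivative_at_withinI by blast
    next
      fix x assume x: "x \<in> closed_segment q0 q1"
      hence xU: "x \<in> U" using segK KU by auto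
      have l1: "linear (frechet_derivative F (at x))"
        using Fdiff xU frechet_derivative_works has_derivative_linear by blast
      have l0: "linear (frechet_derivative F (at q0))"
        using Fd0 has_derivative_linear by blast
      define L where "L = (\<lambda>h. frechet_derivative F (at x) h - frechet_derivative F (at q0) h)"
      have lL: "linear L" unfolding L_def using l1 l0 by (rule linear_compose_sub)
      have sx: "closed_segment q0 x \<subseteq> K"
        using segK x by (meson subset_closed_segment ends_in_segment(1) subset_iff)
      have dx: "norm (x - q0) \<le> norm D"
        using segment_bound(1)[OF x] by (simp add: q0_def q1_def)
      show "onorm (frechet_derivative F (at x) - frechet_derivative F (at q0)) \<le> N * (N * C * norm D)"
      proof (rule onorm_bound)
        show "0 \<le> N * (N * C * norm D)" using N0 C0 by simp
        fix h
        have "norm (L h) \<le> N * (N * C * norm D) * norm h"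
          unfolding N_def
        proof (rule linear_expand_bound[OF lL])
          fix b :: "(real^'r^'d) \<times> (real^'r^'d)" assume b: "b \<in> Basis"
          have "norm (L b) = norm (\<Psi> b x - \<Psi> b q0)" unfolding L_def \<Psi>_def by simp
          also have "\<dots> \<le> N * C * norm (x - q0)" by (rule Lip[OF b sx])
          also have "\<dots> \<le> N * C * norm D" using dx N0 C0 by (simp add: mult_left_mono)
          finally show "norm (L b) \<le> real (card (Basis::((real^'r^'d) \<times> (real^'r^'d)) set)) * C * norm D"
            unfolding N_def .
        qed
        thus "norm ((frechet_derivative F (at x) - frechet_derivative F (at q0)) h) \<le> N * (N * C * norm D) * norm h"
          unfolding L_def by simp
      qed
    next
      show "q0 \<in> closed_segment q0 q1" by simp
    qed
    moreover have "F q1 = R X D" using FR X D unfolding q1_def tangent_bundle_def by auto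
    moreover have "F q0 = X"
    proof -
      have "F (X, 0) = R X 0" using FR X zero_tangent[of X] unfolding tangent_bundle_def by blast
      thus ?thesis using R0 X unfolding q0_def by simp
    qed
    moreover have "q1 - q0 = (0, D)" unfolding q0_def q1_def by simp
    moreover have "norm ((0::real^'r^'d, D)) = norm D" by (simp add: norm_Pair)
    ultimately show "norm (R X D - X - D) \<le> N * N * C * (norm D)\<^sup>2"
      using key by (simp add: power2_eq_square mult_ac)
  qed
qed

lemma limit_arg:
  fixes A n m :: real
  assumes m: "m > 0" and n: "0 \<le> n" and H: "\<And>t. 0 < t \<Longrightarrow> t \<le> 1 \<Longrightarrow> (2 - t) * n / (2*m) \<le> A"
  shows "n / m \<le> A"
proof (rule ccontr)
  assume "\<not> n / m \<le> A"
  hence lt: "A < n / m" by simp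
  hence np: "n > 0" using H[of 1] m n by (cases "n = 0") auto
  define t where "t = min 1 ((m / n) * (n / m - A))"
  have tp: "0 < t" unfolding t_def using lt m np by simp
  have t1: "t \<le> 1" unfolding t_def by simp
  have "t \<le> (m / n) * (n / m - A)" unfolding t_def by simp
  hence "t * n \<le> m * (n/m - A)" using np by (simp add: field_simps)
  moreover have "m * (n/m - A) = n - m * A" using m by (simp add: field_simps)
  ultimately have "t * n \<le> n - m * A" by simp
  hence "A \<le> (n - t*n) / m" using m by (simp add: field_simps)
  moreover have "(n - t*n) / m < (2 - t) * n / (2*m)"
    using m np tp by (simp add: field_simps)
  ultimately show False using H[OF tp t1] by linarith
qed

lemma sub_key:
  fixes X V G :: "'a::real_inner" and s :: "'a \<Rightarrow> real"
  assumes s: "convex_on UNIV s" and m: "\<mu> > 0"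
    and T: "\<And>W t. W \<in> T \<Longrightarrow> t *\<^sub>R W \<in> T" and V: "V \<in> T"
    and min: "\<forall>W\<in>T. G \<bullet> V + (norm V)\<^sup>2 / (2*\<mu>) + s (X + V) \<le> G \<bullet> W + (norm W)\<^sup>2 / (2*\<mu>) + s (X + W)"
  shows "(norm V)\<^sup>2 / \<mu> \<le> s X - s (X + V) - G \<bullet> V"
proof (rule limit_arg[OF m])
  show "0 \<le> (norm V)\<^sup>2" by simp
  fix t :: real assume t: "0 < t" "t \<le> 1"
  define n where "n = (norm V)\<^sup>2"
  have W: "(1 - t) *\<^sub>R V \<in> T" using T[OF V] .
  have conv: "s (X + (1 - t) *\<^sub>R V) \<le> (1 - t) * s (X + V) + t * s X"
  proof -
    have "X + (1 - t) *\<^sub>R V = (1 - t) *\<^sub>R (X + V) + t *\<^sub>R X" by (simp add: algebra_simps)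
    thus ?thesis using convex_onD[OF s, of t "X + V" X] t by simp
  qed
  have "G \<bullet> V + n / (2*\<mu>) + s (X + V) \<le> G \<bullet> ((1 - t) *\<^sub>R V) + (norm ((1 - t) *\<^sub>R V))\<^sup>2 / (2*\<mu>) + s (X + (1 - t) *\<^sub>R V)"
    using min W unfolding n_def by blast
  also have "(norm ((1 - t) *\<^sub>R V))\<^sup>2 = (1 - t)\<^sup>2 * n" unfolding n_def using t
    by (simp add: power_mult_distrib)
  finally have "G \<bullet> V + n / (2*\<mu>) + s (X + V) \<le> (1 - t) * (G \<bullet> V) + (1 - t)\<^sup>2 * n / (2*\<mu>) + ((1 - t) * s (X + V) + t * s X)"
    using conv by simp
  hence "t * (G \<bullet> V + s (X + V) - s X) \<le> ((1 - t)\<^sup>2 - 1) * n / (2*\<mu>)"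
    by (simp add: algebra_simps add_divide_distrib diff_divide_distrib)
  moreover have "((1 - t)\<^sup>2 - 1) * n / (2*\<mu>) = t * ((t - 2) * n / (2*\<mu>))"
    by (simp add: power2_eq_square algebra_simps)
  ultimately have "t * (G \<bullet> V + s (X + V) - s X) \<le> t * ((t - 2) * n / (2*\<mu>))" by simp
  hence "G \<bullet> V + s (X + V) - s X \<le> (t - 2) * n / (2*\<mu>)"
    using t(1) by (rule mult_left_le_imp_le)
  thus "(2 - t) * (norm V)\<^sup>2 / (2*\<mu>) \<le> s X - s (X + V) - G \<bullet> V"
    unfolding n_def by (simp add: algebra_simps diff_divide_distrib)
qed

lemma core:
  fixes u s :: "real^'r^'d \<Rightarrow> real" and gu :: "real^'r^'d \<Rightarrow> real^'r^'d"
    and Sh :: "real^'d^'d" and R :: "real^'r^'d \<Rightarrow> real^'r^'d \<Rightarrow> real^'r^'d"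
    and X V :: "real^'r^'d"
  assumes u_grad: "\<forall>Y. (u has_derivative (\<lambda>H. gu Y \<bullet> H)) (at Y)"
    and u_lip: "\<forall>Y Z. norm (gu Y - gu Z) \<le> Lu * norm (Y - Z)"
    and s_conv: "convex_on UNIV s"
    and s_lip: "\<forall>Y Z. \<bar>s Y - s Z\<bar> \<le> Ls * norm (Y - Z)"
    and rho: "\<rho> > 0" and Lu0: "0 \<le> Lu" and Ls0: "0 \<le> Ls"
    and X: "X \<in> stiefel" and V: "V \<in> tangent X" and m: "0 < \<mu>" "\<mu> \<le> \<mu>0"
    and min: "\<forall>W \<in> tangent X. subobj u s \<rho> Sh X \<mu> V \<le> subobj u s \<rho> Sh X \<mu> W"
    and M0: "0 \<le> M"
    and Mb: "\<forall>X D. X \<in> stiefel \<longrightarrow> D \<in> tangent X \<longrightarrow> norm D \<le> Bv \<longrightarrow> norm (R X D - X - D) \<le> M * (norm D)\<^sup>2"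
    and sX_def: "sX = sqrt (real CARD('r))"
    and Gm_def: "Gm = norm (gu 0) + Lu * sX + 4 * \<rho> * sX * norm Sh"
    and Bv_def: "Bv = \<mu>0 * (Ls + Gm)"
    and E_def: "E = (1 + M * Bv)\<^sup>2"
    and K0_def: "K0 = Lu + 2 * \<rho> * norm Sh"
    and K1_def: "K1 = 2 * \<rho> * (norm Sh)\<^sup>2 * (2 * sX + 1)\<^sup>2"
    and Q_def: "Q = \<mu>0 * ((Gm + Ls) * M + K0 * E) + K1 * E"
    and a: "0 < a" "a \<le> 1" "a * Q \<le> 1/2" "a * (Bv * (1 + M * Bv)) \<le> 1"
  shows "fsm u s \<rho> Sh X \<mu> - fsm u s \<rho> Sh (R X (a *\<^sub>R V)) \<mu> \<ge> a / (2 * \<mu>) * (norm V)\<^sup>2"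
proof -
  define G where "G = egrad (\<lambda>Y. gsm u \<rho> Sh Y \<mu>) X"
  have G: "G = gu X + Gw \<rho> Sh X \<mu>" unfolding G_def using gsm_deriv(2)[OF rho m(1) u_grad] .
  have nX: "norm X = sX" using stiefel_norm[OF X] sX_def by simp
  have sX0: "0 \<le> sX" unfolding sX_def by simp
  have Gb: "norm G \<le> Gm"
  proof -
    have "norm (gu X - gu 0) \<le> Lu * norm (X - 0)" using u_lip by blast
    hence g1: "norm (gu X) \<le> norm (gu 0) + Lu * sX" using nX norm_triangle_ineq2[of "gu X" "gu 0"] by simp
    have g2: "norm (Gw \<rho> Sh X \<mu>) \<le> 4 * \<rho> * sX * norm Sh" using Gw_norm[OF rho m(1), of Sh X] nX by simp
    show ?thesis unfolding G Gm_def using norm_triangle_ineq[of "gu X" "Gw \<rho> Sh X \<mu>"] g1 g2 by linarith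
  qed
  have Gm0: "0 \<le> Gm" using Gb norm_ge_zero order_trans by blast
  define n where "n = norm V"
  have n0: "0 \<le> n" unfolding n_def by simp
  have Kin: "n\<^sup>2 / \<mu> \<le> s X - s (X + V) - G \<bullet> V"
    unfolding n_def
  proof (rule sub_key[OF s_conv m(1), where T="tangent X"])
    show "\<And>W t. W \<in> tangent X \<Longrightarrow> t *\<^sub>R W \<in> tangent X" by (rule tangent_scale)
    show "V \<in> tangent X" by (rule V)
    show "\<forall>W\<in>tangent X. G \<bullet> V + (norm V)\<^sup>2 / (2 * \<mu>) + s (X + V) \<le> G \<bullet> W + (norm W)\<^sup>2 / (2 * \<mu>) + s (X + W)"
      using min unfolding subobj_def G_def .
  qed
  have sXV: "s X - s (X + V) \<le> Ls * n"
    using s_lip[rule_format, of X "X + V"] unfolding n_def by simp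
  have GV: "- (G \<bullet> V) \<le> Gm * n"
  proof -
    have "\<bar>G \<bullet> V\<bar> \<le> norm G * norm V" by (rule Cauchy_Schwarz_ineq2)
    also have "\<dots> \<le> Gm * n" unfolding n_def using Gb by (simp add: mult_right_mono)
    finally show ?thesis by linarith
  qed
  have nb: "n \<le> \<mu> * (Ls + Gm)"
  proof (cases "n = 0")
    case True thus ?thesis using m Ls0 Gm0 by simp
  next
    case False
    hence np: "n > 0" using n0 by simp
    have "n\<^sup>2 / \<mu> \<le> (Ls + Gm) * n" using Kin sXV GV by (simp add: algebra_simps)
    hence "n * n \<le> (\<mu> * (Ls + Gm)) * n" using m(1) by (simp add: field_simps power2_eq_square)
    thus ?thesis using np by (simp add: mult_le_cancel_right_pos)
  qed
  have nBv: "n \<le> Bv" unfolding Bv_def using nb m Ls0 Gm0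
    by (meson add_nonneg_nonneg mult_right_mono order_trans)
  have Bv0: "0 \<le> Bv" using n0 nBv by simp
  have aV: "a *\<^sub>R V \<in> tangent X" by (rule tangent_scale[OF V])
  have naV: "norm (a *\<^sub>R V) = a * n" unfolding n_def using a by simp
  have an: "a * n \<le> n" using a n0 by (simp add: mult_left_le_one_le)
  define Y where "Y = R X (a *\<^sub>R V)"
  define Z where "Z = X + a *\<^sub>R V"
  define e where "e = norm (Y - Z)"
  have e: "e \<le> M * (a * n)\<^sup>2"
  proof -
    have "norm (a *\<^sub>R V) \<le> Bv" using naV an nBv by simp
    from Mb[rule_format, OF X aV this] show ?thesis
      unfolding e_def Y_def Z_def naV by (simp add: algebra_simps)
  qed
  have e0: "0 \<le> e" unfolding e_def by simp
  define D where "D = Y - X"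
  have DZ: "D = a *\<^sub>R V + (Y - Z)" unfolding D_def Z_def by simp
  have Mann: "M * (a * n)\<^sup>2 \<le> (a * n) * (M * Bv)"
  proof -
    have "M * (a * n)\<^sup>2 = (a * n) * (M * (a * n))" by (simp add: power2_eq_square mult_ac)
    also have "\<dots> \<le> (a * n) * (M * Bv)"
      using M0 an nBv a n0 by (intro mult_left_mono) auto
    finally show ?thesis .
  qed
  have nD: "norm D \<le> a * n * (1 + M * Bv)"
  proof -
    have "norm D \<le> a * n + e" unfolding DZ e_def using norm_triangle_ineq[of "a *\<^sub>R V" "Y - Z"] naV by simp
    also have "\<dots> \<le> a * n + (a * n) * (M * Bv)" using e Mann by simp
    finally show ?thesis by (simp add: algebra_simps)
  qed
  have nD1: "norm D \<le> 1"
  proof -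
    have "a * n * (1 + M * Bv) \<le> a * (Bv * (1 + M * Bv))"
      using nBv a M0 Bv0 by (simp add: mult_left_mono mult_right_mono)
    thus ?thesis using nD a by linarith
  qed
  have nD2: "(norm D)\<^sup>2 \<le> a\<^sup>2 * n\<^sup>2 * E"
  proof -
    have "(norm D)\<^sup>2 \<le> (a * n * (1 + M * Bv))\<^sup>2" using nD by (intro power_mono) auto
    thus ?thesis unfolding E_def by (simp add: power_mult_distrib)
  qed
  have ud: "u (X + D) - u X - gu X \<bullet> D \<le> Lu * (norm D)\<^sup>2"
    using u_descent[OF u_grad u_lip Lu0, of X D] by simp
  have wd: "wsm \<rho> Sh (X + D) \<mu> - wsm \<rho> Sh X \<mu> - Gw \<rho> Sh X \<mu> \<bullet> D
      \<le> (2*\<rho>*(norm Sh)\<^sup>2*(2 * sX+1)\<^sup>2/\<mu> + 2*\<rho>*norm Sh) * (norm D)\<^sup>2"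
    using W_bounds(1)[OF rho m(1) nD1, where Sh=Sh and X=X] nX unfolding wsm_hub[OF rho m(1)] by simp
  have gd: "gsm u \<rho> Sh Y \<mu> - gsm u \<rho> Sh X \<mu> - G \<bullet> D \<le> (K0 + K1/\<mu>) * (norm D)\<^sup>2"
  proof -
    have YD: "Y = X + D" unfolding D_def by simp
    have "gsm u \<rho> Sh Y \<mu> - gsm u \<rho> Sh X \<mu> - G \<bullet> D =
        (u (X + D) - u X - gu X \<bullet> D) + (wsm \<rho> Sh (X + D) \<mu> - wsm \<rho> Sh X \<mu> - Gw \<rho> Sh X \<mu> \<bullet> D)"
      unfolding gsm_def G YD by (simp add: inner_add_left)
    also have "\<dots> \<le> Lu * (norm D)\<^sup>2 + (2*\<rho>*(norm Sh)\<^sup>2*(2 * sX+1)\<^sup>2/\<mu> + 2*\<rho>*norm Sh) * (norm D)\<^sup>2"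
      using ud wd by linarith
    also have "\<dots> = (K0 + K1/\<mu>) * (norm D)\<^sup>2" unfolding K0_def K1_def by (simp add: algebra_simps)
    finally show ?thesis .
  qed
  have sY: "s Y \<le> s Z + Ls * e" using s_lip[rule_format, of Y Z] unfolding e_def by simp
  have sZ: "s Z \<le> (1 - a) * s X + a * s (X + V)"
  proof -
    have "Z = (1 - a) *\<^sub>R X + a *\<^sub>R (X + V)" unfolding Z_def by (simp add: algebra_simps)
    thus ?thesis using convex_onD[OF s_conv, of a X "X + V"] a by simp
  qed
  have GD: "G \<bullet> D \<le> a * (G \<bullet> V) + Gm * e"
  proof -
    have "G \<bullet> D = a * (G \<bullet> V) + G \<bullet> (Y - Z)" unfolding DZ by (simp add: inner_add_right)
    moreover have "G \<bullet> (Y - Z) \<le> Gm * e"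
    proof -
      have "G \<bullet> (Y - Z) \<le> norm G * norm (Y - Z)" by (rule norm_cauchy_schwarz)
      also have "\<dots> \<le> Gm * e" unfolding e_def using Gb by (simp add: mult_right_mono)
      finally show ?thesis .
    qed
    ultimately show ?thesis by linarith
  qed
  define P where "P = (Gm + Ls) * M + (K0 + K1/\<mu>) * E"
  have K0: "0 \<le> K0" unfolding K0_def using Lu0 rho by simp
  have K1: "0 \<le> K1" unfolding K1_def using rho by simp
  have E0: "0 \<le> E" unfolding E_def by simp
  have muP: "\<mu> * P \<le> Q"
  proof -
    have "\<mu> * P = \<mu> * ((Gm + Ls) * M + K0 * E) + K1 * E" unfolding P_def using m(1) by (simp add: field_simps)
    also have "\<dots> \<le> \<mu>0 * ((Gm + Ls) * M + K0 * E) + K1 * E"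
      using m Gm0 Ls0 M0 K0 E0 by (intro add_right_mono mult_right_mono) auto
    finally show ?thesis unfolding Q_def .
  qed
  have aP: "a * P \<le> 1 / (2 * \<mu>)"
  proof -
    have "\<mu> * (a * P) = a * (\<mu> * P)" by simp
    also have "\<dots> \<le> a * Q" using muP a by (simp add: mult_left_mono)
    also have "\<dots> \<le> 1/2" by (rule a(3))
    finally have "\<mu> * (a * P) \<le> 1/2" .
    thus ?thesis using m(1) by (simp add: field_simps)
  qed
  have total: "fsm u s \<rho> Sh Y \<mu> - fsm u s \<rho> Sh X \<mu> \<le> - (a * n\<^sup>2 / \<mu>) + a * n\<^sup>2 * (a * P)"
  proof -
    have "fsm u s \<rho> Sh Y \<mu> - fsm u s \<rho> Sh X \<mu> = (gsm u \<rho> Sh Y \<mu> - gsm u \<rho> Sh X \<mu>) + (s Y - s X)"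
      unfolding fsm_def by simp
    also have "\<dots> \<le> (G \<bullet> D + (K0 + K1/\<mu>) * (norm D)\<^sup>2) + ((1 - a) * s X + a * s (X + V) + Ls * e - s X)"
      using gd sY sZ by linarith
    also have "\<dots> \<le> (a * (G \<bullet> V) + Gm * e + (K0 + K1/\<mu>) * (a\<^sup>2 * n\<^sup>2 * E)) + ((1 - a) * s X + a * s (X + V) + Ls * e - s X)"
    proof -
      have "(K0 + K1/\<mu>) * (norm D)\<^sup>2 \<le> (K0 + K1/\<mu>) * (a\<^sup>2 * n\<^sup>2 * E)"
        using nD2 K0 K1 m(1) by (intro mult_left_mono) auto
      thus ?thesis using GD by linarith
    qed
    also have "\<dots> = a * (G \<bullet> V + s (X + V) - s X) + (Gm + Ls) * e + (K0 + K1/\<mu>) * (a\<^sup>2 * n\<^sup>2 * E)"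
      by (simp add: algebra_simps)
    also have "\<dots> \<le> a * (- (n\<^sup>2 / \<mu>)) + (Gm + Ls) * (M * (a * n)\<^sup>2) + (K0 + K1/\<mu>) * (a\<^sup>2 * n\<^sup>2 * E)"
    proof -
      have "a * (G \<bullet> V + s (X + V) - s X) \<le> a * (- (n\<^sup>2 / \<mu>))" using Kin a by (intro mult_left_mono) auto
      moreover have "(Gm + Ls) * e \<le> (Gm + Ls) * (M * (a * n)\<^sup>2)" using e Gm0 Ls0 by (intro mult_left_mono) auto
      ultimately show ?thesis by linarith
    qed
    also have "\<dots> = - (a * n\<^sup>2 / \<mu>) + a * n\<^sup>2 * (a * P)"
      unfolding P_def by (simp add: algebra_simps power_mult_distrib power2_eq_square)
    finally show ?thesis .
  qed
  have "a * n\<^sup>2 * (a * P) \<le> a * n\<^sup>2 * (1 / (2 * \<mu>))" using aP a by (intro mult_left_mono) auto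
  hence "fsm u s \<rho> Sh Y \<mu> - fsm u s \<rho> Sh X \<mu> \<le> - (a * n\<^sup>2 / \<mu>) + a * n\<^sup>2 * (1 / (2 * \<mu>))"
    using total by linarith
  also have "- (a * n\<^sup>2 / \<mu>) + a * n\<^sup>2 * (1 / (2 * \<mu>)) = - (a / (2 * \<mu>) * n\<^sup>2)"
    using m(1) by (simp add: field_simps)
  finally show ?thesis unfolding Y_def n_def by simp
qed

theorem mainTheorem10:
  fixes u s :: "real^'r^'d \<Rightarrow> real" and gu :: "real^'r^'d \<Rightarrow> real^'r^'d"
    and Lu Ls \<rho> \<mu>bar \<theta> \<beta> :: real and Sigma Sh :: "real^'d^'d"
    and R :: "real^'r^'d \<Rightarrow> real^'r^'d \<Rightarrow> real^'r^'d"
    and X V :: "nat \<Rightarrow> real^'r^'d" and \<mu> \<alpha> :: "nat \<Rightarrow> real"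
  assumes dim: "CARD('r) < CARD('d)"
    and u_grad: "\<forall>Y. (u has_derivative (\<lambda>H. gu Y \<bullet> H)) (at Y)"
    and u_lip: "\<forall>Y Z. norm (gu Y - gu Z) \<le> Lu * norm (Y - Z)"
    and s_conv: "convex_on UNIV s"
    and s_lip: "\<forall>Y Z. \<bar>s Y - s Z\<bar> \<le> Ls * norm (Y - Z)"
    and Sigma_psd: "psd Sigma"
    and Sh_sqrt: "psd Sh" "Sh ** Sh = Sigma"
    and rho_pos: "\<rho> > 0"
    and retr: "retraction R"
    and X0: "X 0 \<in> stiefel"
    and mu0: "\<mu> 0 > 0" and mubar: "0 \<le> \<mu>bar" "\<mu>bar \<le> \<mu> 0"
    and theta: "0 < \<theta>" "\<theta> < 1"
    and beta: "0 < \<beta>" "\<beta> < 1"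
    and sub: "\<forall>k. (\<forall>j<k. \<not> smpg_stop \<mu>bar (V j) (\<mu> j)) \<longrightarrow>
                 V k \<in> tangent (X k) \<and>
                 (\<forall>W \<in> tangent (X k). subobj u s \<rho> Sh (X k) (\<mu> k) (V k) \<le> subobj u s \<rho> Sh (X k) (\<mu> k) W)"
    and step: "\<forall>k. (\<forall>j\<le>k. \<not> smpg_stop \<mu>bar (V j) (\<mu> j)) \<longrightarrow>
                 \<alpha> k = \<beta> ^ (LEAST m. armijo u s \<rho> Sh R (X k) (V k) (\<mu> k) (\<beta> ^ m)) \<and>
                 X (Suc k) = R (X k) (\<alpha> k *\<^sub>R V k) \<and>
                 \<mu> (Suc k) = (if norm (V k) > (\<mu> k)\<^sup>2 then \<mu> k else \<theta> * \<mu> k)"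
  shows "\<exists>ab. 0 < ab \<and> ab \<le> 1 \<and>
           (\<forall>k. (\<forall>j<k. \<not> smpg_stop \<mu>bar (V j) (\<mu> j)) \<longrightarrow>
              (\<forall>a. 0 < a \<and> a < ab \<longrightarrow>
                 fsm u s \<rho> Sh (X k) (\<mu> k) - fsm u s \<rho> Sh (R (X k) (a *\<^sub>R V k)) (\<mu> k)
                   \<ge> a / (2 * \<mu> k) * (norm (V k))\<^sup>2)) \<and>
           (\<forall>k. (\<forall>j\<le>k. \<not> smpg_stop \<mu>bar (V j) (\<mu> j)) \<longrightarrow>
              (\<exists>m. armijo u s \<rho> Sh R (X k) (V k) (\<mu> k) (\<beta> ^ m)) \<and>
              (LEAST m. armijo u s \<rho> Sh R (X k) (V k) (\<mu> k) (\<beta> ^ m)) \<le> nat \<lceil>log \<beta> ab\<rceil> \<and>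
              \<alpha> k \<ge> \<beta> * ab)"
proof -
  have Lu0: "0 \<le> Lu" and Ls0: "0 \<le> Ls"
  proof -
    obtain b :: "real^'r^'d" where b: "b \<in> Basis" using nonempty_Basis by blast
    have nb: "norm b = 1" using b by simp
    show "0 \<le> Lu" using u_lip[rule_format, of b 0] nb by (metis mult.right_neutral norm_ge_zero order_trans diff_zero)
    show "0 \<le> Ls" using s_lip[rule_format, of b 0] nb by (metis mult.right_neutral abs_ge_zero order_trans diff_zero)
  qed
  have inv: "\<And>k. (\<forall>j<k. \<not> smpg_stop \<mu>bar (V j) (\<mu> j)) \<Longrightarrow> X k \<in> stiefel \<and> 0 < \<mu> k \<and> \<mu> k \<le> \<mu> 0"
  proof -
    fix k show "(\<forall>j<k. \<not> smpg_stop \<mu>bar (V j) (\<mu> j)) \<Longrightarrow> X k \<in> stiefel \<and> 0 < \<mu> k \<and> \<mu> k \<le> \<mu> 0"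
    proof (induction k)
      case 0 thus ?case using X0 mu0 by simp
    next
      case (Suc k)
      have H: "\<forall>j<k. \<not> smpg_stop \<mu>bar (V j) (\<mu> j)" "\<forall>j\<le>k. \<not> smpg_stop \<mu>bar (V j) (\<mu> j)"
        using Suc.prems by auto
      have IH: "X k \<in> stiefel" "0 < \<mu> k" "\<mu> k \<le> \<mu> 0" using Suc.IH[OF H(1)] by auto
      have Vk: "V k \<in> tangent (X k)" using sub H(1) by blast
      have st: "\<alpha> k = \<beta> ^ (LEAST m. armijo u s \<rho> Sh R (X k) (V k) (\<mu> k) (\<beta> ^ m)) \<and>
                 X (Suc k) = R (X k) (\<alpha> k *\<^sub>R V k) \<and>
                 \<mu> (Suc k) = (if norm (V k) > (\<mu> k)\<^sup>2 then \<mu> k else \<theta> * \<mu> k)"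
        using step H(2) by blast
      have "R (X k) (\<alpha> k *\<^sub>R V k) \<in> stiefel"
        using retr IH(1) tangent_scale[OF Vk, of "\<alpha> k"] unfolding retraction_def tangent_bundle_def by blast
      moreover have "0 < \<mu> (Suc k) \<and> \<mu> (Suc k) \<le> \<mu> 0"
      proof -
        have "\<theta> * \<mu> k \<le> \<mu> k" using theta IH by (simp add: mult_left_le_one_le)
        hence "\<theta> * \<mu> k \<le> \<mu> 0" using IH by linarith
        moreover have "0 < \<theta> * \<mu> k" using theta IH by simp
        ultimately show ?thesis using st IH by auto
      qed
      ultimately show ?case using st by simp
    qed
  qed
  define sX where "sX = sqrt (real CARD('r))"
  define Gm where "Gm = norm (gu 0) + Lu * sX + 4 * \<rho> * sX * norm Sh"
  define Bv where "Bv = \<mu> 0 * (Ls + Gm)"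
  have sX0: "0 \<le> sX" unfolding sX_def by simp
  have Gm0: "0 \<le> Gm" unfolding Gm_def using sX0 Lu0 rho_pos by simp
  have Bv0: "0 \<le> Bv" unfolding Bv_def using mu0 Ls0 Gm0 by simp
  obtain M where M0: "0 \<le> M" and Mb: "\<forall>X D. X \<in> stiefel \<longrightarrow> D \<in> tangent X \<longrightarrow> norm D \<le> Bv \<longrightarrow> norm (R X D - X - D) \<le> M * (norm D)\<^sup>2"
    using retr_bound[OF retr Bv0] by blast
  define E where "E = (1 + M * Bv)\<^sup>2"
  define K0 where "K0 = Lu + 2 * \<rho> * norm Sh"
  define K1 where "K1 = 2 * \<rho> * (norm Sh)\<^sup>2 * (2 * sX + 1)\<^sup>2"
  define Q where "Q = \<mu> 0 * ((Gm + Ls) * M + K0 * E) + K1 * E"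
  have Q0: "0 \<le> Q" unfolding Q_def K0_def K1_def E_def using mu0 Gm0 Ls0 M0 Lu0 rho_pos by simp
  define W where "W = Bv * (1 + M * Bv)"
  have W0: "0 \<le> W" unfolding W_def using Bv0 M0 by simp
  define ab0 where "ab0 = 1 / (1 + 2 * Q + W)"
  have ab0: "0 < ab0" "ab0 \<le> 1" "ab0 * Q \<le> 1/2" "ab0 * W \<le> 1"
    unfolding ab0_def using Q0 W0 by (auto simp: field_simps)
  have coreK: "\<And>k a. (\<forall>j<k. \<not> smpg_stop \<mu>bar (V j) (\<mu> j)) \<Longrightarrow> 0 < a \<Longrightarrow> a \<le> ab0 \<Longrightarrow>
      fsm u s \<rho> Sh (X k) (\<mu> k) - fsm u s \<rho> Sh (R (X k) (a *\<^sub>R V k)) (\<mu> k) \<ge> a / (2 * \<mu> k) * (norm (V k))\<^sup>2"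
  proof -
    fix k a assume H: "\<forall>j<k. \<not> smpg_stop \<mu>bar (V j) (\<mu> j)" and a: "0 < a" "a \<le> ab0"
    have I: "X k \<in> stiefel" "0 < \<mu> k" "\<mu> k \<le> \<mu> 0" using inv[OF H] by auto
    have S: "V k \<in> tangent (X k)" "\<forall>W \<in> tangent (X k). subobj u s \<rho> Sh (X k) (\<mu> k) (V k) \<le> subobj u s \<rho> Sh (X k) (\<mu> k) W"
      using sub H by blast+
    have a1: "a \<le> 1" using a ab0 by simp
    have aQ: "a * Q \<le> 1/2" using mult_right_mono[OF a(2) Q0] ab0 by simp
    have aW: "a * W \<le> 1" using mult_right_mono[OF a(2) W0] ab0 by simp
    show "fsm u s \<rho> Sh (X k) (\<mu> k) - fsm u s \<rho> Sh (R (X k) (a *\<^sub>R V k)) (\<mu> k) \<ge> a / (2 * \<mu> k) * (norm (V k))\<^sup>2"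
      by (rule core[OF u_grad u_lip s_conv s_lip rho_pos Lu0 Ls0 I(1) S(1) I(2) I(3) S(2) M0 Mb
            sX_def Gm_def Bv_def E_def K0_def K1_def Q_def a(1) a1 aQ aW[unfolded W_def]])
  qed
  obtain N where N: "\<beta> ^ N < ab0" using real_arch_pow_inv[OF ab0(1) beta(2)] by blast
  define ab where "ab = \<beta> ^ N * (1 + \<beta>) / 2"
  have bN: "0 < \<beta> ^ N" "\<beta> ^ N \<le> 1" using beta by (auto simp: power_le_one)
  have ab_lt: "ab < \<beta> ^ N" unfolding ab_def using bN beta by (simp add: field_simps)
  have ab_gt: "\<beta> ^ Suc N < ab" unfolding ab_def using bN beta by (simp add: field_simps)
  have ab_pos: "0 < ab" unfolding ab_def using bN beta by simp
  have ab_le: "ab \<le> ab0" using ab_lt N by simp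
  have ab1: "ab \<le> 1" using ab_lt bN by simp
  have lnb: "ln \<beta> < 0" using beta by simp
  have ceil: "nat \<lceil>log \<beta> ab\<rceil> = Suc N"
  proof -
    have l1: "ln ab < real N * ln \<beta>"
      using ab_lt ab_pos bN by (simp add: ln_realpow[symmetric] beta)
    have l2: "real (Suc N) * ln \<beta> < ln ab"
      using ab_gt ab_pos beta by (metis ln_less_cancel_iff ln_realpow zero_less_power)
    have "real N < log \<beta> ab" unfolding log_def using l1 lnb by (simp add: field_simps)
    moreover have "log \<beta> ab \<le> real (Suc N)" unfolding log_def using l2 lnb by (simp add: field_simps)
    ultimately have "\<lceil>log \<beta> ab\<rceil> = int (Suc N)" by (simp add: ceiling_eq_iff)
    thus ?thesis by simp
  qed
  show ?thesis
  proof (intro exI[of _ ab] conjI allI impI)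
    show "0 < ab" by (rule ab_pos)
    show "ab \<le> 1" by (rule ab1)
  next
    fix k a assume H: "\<forall>j<k. \<not> smpg_stop \<mu>bar (V j) (\<mu> j)" and a: "0 < a \<and> a < ab"
    show "fsm u s \<rho> Sh (X k) (\<mu> k) - fsm u s \<rho> Sh (R (X k) (a *\<^sub>R V k)) (\<mu> k) \<ge> a / (2 * \<mu> k) * (norm (V k))\<^sup>2"
      using coreK[OF H] a ab_le by simp
  next
    fix k assume H: "\<forall>j\<le>k. \<not> smpg_stop \<mu>bar (V j) (\<mu> j)"
    have H': "\<forall>j<k. \<not> smpg_stop \<mu>bar (V j) (\<mu> j)" using H by simp
    have arm: "armijo u s \<rho> Sh R (X k) (V k) (\<mu> k) (\<beta> ^ Suc N)"
      using coreK[OF H', of "\<beta> ^ Suc N"] ab_gt ab_le beta unfolding armijo_def by simp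
    show "\<exists>m. armijo u s \<rho> Sh R (X k) (V k) (\<mu> k) (\<beta> ^ m)" using arm by blast
    have L: "(LEAST m. armijo u s \<rho> Sh R (X k) (V k) (\<mu> k) (\<beta> ^ m)) \<le> Suc N"
      using arm by (rule Least_le)
    thus "(LEAST m. armijo u s \<rho> Sh R (X k) (V k) (\<mu> k) (\<beta> ^ m)) \<le> nat \<lceil>log \<beta> ab\<rceil>"
      using ceil by simp
    have "\<alpha> k = \<beta> ^ (LEAST m. armijo u s \<rho> Sh R (X k) (V k) (\<mu> k) (\<beta> ^ m))" using step H by blast
    moreover have "\<beta> ^ Suc N \<le> \<beta> ^ (LEAST m. armijo u s \<rho> Sh R (X k) (V k) (\<mu> k) (\<beta> ^ m))"
      using L beta by (intro power_decreasing) auto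
    ultimately have "\<alpha> k \<ge> \<beta> ^ Suc N" by simp
    moreover have "\<beta> ^ Suc N \<ge> \<beta> * ab" using ab_lt beta by simp
    ultimately show "\<alpha> k \<ge> \<beta> * ab" by linarith
  qed
qed

end
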